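(* Let $N\in\mathbb{N}^*$, $\sigma>0$, and let $W$ be a symmetric $N\times N$ random matrix whose entries on and above the diagonal are i.i.d. $\mathcal{N}(0,\sigma^2)$. For $T\in\mathbb{N}^*$ let $B_{T,N}$ be its generalised matrix of moments of order $T$. Then for all $l_1,l_2\in\{0,\ldots,T-1\}$, \[ B_{T,N}(l_1,l_2)\le\frac1{\sigma^2}\cdot\frac{1}{\frac{l_1+l_2}{N(N+1)/2}+1}\,B_{T,N}(l_1+1,l_2+1). \]
   Context: Generalised matrix of moments: for $i\in[N]$, $\beta_{i,0}=1$, $\beta_{i,l}=\sum_{i_1,\ldots,i_l=1}^N W_{ii_1}\cdots W_{i_{l-1}i_l}$ for $l\ge1$, and $B_{T,N}(l_1,l_2)=\mathbb{E}\sum_{i=1}^N\beta_{i,l_1}\beta_{i,l_2}$, $0\le l_1,l_2\le T$. *)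

theory Defs
  imports "HOL-Probability.Probability"
begin

text \<open>Index set of the independent entries (on and above the diagonal), 0-based indices.\<close>
definition upper_idx :: "nat \<Rightarrow> (nat \<times> nat) set" where
  "upper_idx N = {(i, j). i \<le> j \<and> j < N}"

definition gauss_entries :: "nat \<Rightarrow> real \<Rightarrow> ((nat \<times> nat) \<Rightarrow> real) measure" where
  "gauss_entries N \<sigma> = PiM (upper_idx N) (\<lambda>_. density lborel (normal_density 0 \<sigma>))"

definition symW :: "((nat \<times> nat) \<Rightarrow> real) \<Rightarrow> nat \<Rightarrow> nat \<Rightarrow> real" where
  "symW x i j = x (min i j, max i j)"

text \<open>beta_{i,l} = sum over i_1..i_l in [N] of W_{i i_1} W_{i_1 i_2} ... W_{i_{l-1} i_l};
  the path (i_1,...,i_l) is the list xs, and beta_{i,0} = 1 (empty product).\<close>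
definition beta :: "nat \<Rightarrow> (nat \<Rightarrow> nat \<Rightarrow> real) \<Rightarrow> nat \<Rightarrow> nat \<Rightarrow> real" where
  "beta N W i l = (\<Sum>xs\<in>{xs. length xs = l \<and> set xs \<subseteq> {..<N}}.
                      \<Prod>k<l. W ((i # xs) ! k) (xs ! k))"

definition Bmom :: "nat \<Rightarrow> real \<Rightarrow> nat \<Rightarrow> nat \<Rightarrow> real" where
  "Bmom N \<sigma> l1 l2 = (\<integral>x. (\<Sum>i<N. beta N (symW x) i l1 * beta N (symW x) i l2) \<partial>gauss_entries N \<sigma>)"

end

theory Submission
  imports Defs
begin


definition G :: "real \<Rightarrow> real measure" where
  "G \<sigma> = density lborel (normal_density 0 \<sigma>)"

definition mu :: "real \<Rightarrow> nat \<Rightarrow> real" where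
  "mu \<sigma> k = (\<integral>t. t ^ k \<partial>G \<sigma>)"

lemma integrable_G: assumes "\<sigma> > 0" shows "integrable (G \<sigma>) (\<lambda>t. t ^ k)"
  unfolding G_def
proof (subst integrable_density)
  show "integrable lborel (\<lambda>x. normal_density 0 \<sigma> x *\<^sub>R x ^ k)"
    using integrable_normal_moment[of \<sigma> 0 k] assms by simp
qed auto

lemma mu_eq: "mu \<sigma> k = (\<integral>t. normal_density 0 \<sigma> t * t ^ k \<partial>lborel)"
  unfolding mu_def G_def by (subst integral_density) auto

lemma mu_even: "\<sigma> > 0 \<Longrightarrow> mu \<sigma> (2*k) = fact (2 * k) / ((2 / \<sigma>\<^sup>2)^k * fact k)"
  unfolding mu_eq using integral_normal_moment_even[of \<sigma> 0 k] by simp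

lemma mu_odd: "\<sigma> > 0 \<Longrightarrow> mu \<sigma> (2*k+1) = 0"
  unfolding mu_eq using integral_normal_moment_odd[of \<sigma> 0 k] by simp

lemma mu_nonneg: assumes "\<sigma> > 0" shows "mu \<sigma> k \<ge> 0"
proof (cases "even k")
  case True then obtain j where "k = 2*j" by auto
  thus ?thesis using assms by (simp add: mu_even)
next
  case False then obtain j where "k = 2*j+1" using oddE by blast
  thus ?thesis using mu_odd[OF assms, of j] by simp
qed

lemma mu_rec: assumes "\<sigma> > 0" shows "mu \<sigma> (k+2) = \<sigma>\<^sup>2 * (real k + 1) * mu \<sigma> k"
proof (cases "even k")
  case True then obtain j where k: "k = 2*j" by auto
  have e: "k + 2 = 2 * Suc j" using k by simp
  have "mu \<sigma> (2 * Suc j) = fact (2 * Suc j) / ((2 / \<sigma>\<^sup>2)^Suc j * fact (Suc j))"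
    using mu_even[OF assms] .
  also have "\<dots> = \<sigma>\<^sup>2 * (real k + 1) * (fact (2 * j) / ((2 / \<sigma>\<^sup>2)^j * fact j))"
  proof -
    have f1: "(fact (2 * Suc j)::real) = (2*real j+2)*(2*real j+1)*fact(2*j)"
      by (simp add: fact_Suc algebra_simps)
    have f2: "(fact (Suc j)::real) = (real j+1)*fact j" by (simp add: fact_Suc algebra_simps)
    have f3: "(2 / \<sigma>\<^sup>2)^Suc j = (2 / \<sigma>\<^sup>2) * (2 / \<sigma>\<^sup>2)^j" by simp
    have p: "(2 / \<sigma>\<^sup>2)^j > 0" "(fact j::real) > 0" using assms by auto
    have gen: "\<And>a c F t g (s::real). a > 0 \<Longrightarrow> t > 0 \<Longrightarrow> g > 0 \<Longrightarrow> s > 0 \<Longrightarrow>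
       (2*a)*c*F/((2/s)*t*(a*g)) = s*c*(F/(t*g))" by (simp add: field_simps)
    have "(2*real j+2) = 2*(real j+1)" by simp
    then show ?thesis unfolding f1 f2 f3 k using assms p gen[of "real j + 1" "(2 / \<sigma>\<^sup>2)^j" "fact j" "\<sigma>\<^sup>2" "2*real j+1" "fact (2*j)"]
      by simp
  qed
  finally show ?thesis unfolding e using mu_even[OF assms, of j] k by simp
next
  case False then obtain j where k: "k = 2*j+1" using oddE by blast
  have e: "k + 2 = 2 * Suc j + 1" using k by simp
  show ?thesis unfolding e using mu_odd[OF assms, of j] mu_odd[OF assms, of "Suc j"] k by simp
qed



fun steps :: "nat list \<Rightarrow> (nat \<times> nat) list" where
  "steps (a # b # r) = (a, b) # steps (b # r)"
| "steps _ = []"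

definition edge :: "nat \<Rightarrow> nat \<Rightarrow> nat \<times> nat" where
  "edge u v = (min u v, max u v)"

definition wp :: "(nat \<Rightarrow> nat \<Rightarrow> real) \<Rightarrow> nat list \<Rightarrow> real" where
  "wp W w = prod_list (map (\<lambda>(u, v). W u v) (steps w))"

definition cnt :: "nat list \<Rightarrow> nat \<times> nat \<Rightarrow> nat" where
  "cnt w a = count_list (map (\<lambda>(u, v). edge u v) (steps w)) a"

lemma steps_split: "steps (u @ c # v) = steps (u @ [c]) @ steps (c # v)"
  by (induction u rule: steps.induct) auto

lemma length_steps: "length (steps w) = length w - 1"
  by (induction w rule: steps.induct) auto

lemma nth_steps: "q < length w - 1 \<Longrightarrow> steps w ! q = (w ! q, w ! Suc q)"
  by (induction w arbitrary: q rule: steps.induct) (auto simp: nth_Cons split: nat.splits)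

lemma set_steps: "(u, v) \<in> set (steps w) \<Longrightarrow> u \<in> set w \<and> v \<in> set w"
  by (induction w rule: steps.induct) auto

lemma wp_Cons2: "wp W (a # b # r) = W a b * wp W (b # r)"
  by (simp add: wp_def)

lemma wp_single[simp]: "wp W [a] = 1"
  by (simp add: wp_def)

lemma beta_prod: "length xs = l \<Longrightarrow> (\<Prod>k<l. W ((i # xs) ! k) (xs ! k)) = wp W (i # xs)"
proof (induction xs arbitrary: i l)
  case Nil then show ?case by simp
next
  case (Cons x xs)
  then have l: "l = Suc (length xs)" by simp
  have "(\<Prod>k<l. W ((i # x # xs) ! k) ((x # xs) ! k)) =
        W i x * (\<Prod>k<length xs. W ((x # xs) ! k) (xs ! k))"
    unfolding l by (subst prod.lessThan_Suc_shift) simp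
  also have "\<dots> = W i x * wp W (x # xs)" using Cons.IH[of "length xs" x] by simp
  finally show ?case by (simp add: wp_Cons2)
qed

lemma wp_split: "wp W (u @ c # v) = wp W (u @ [c]) * wp W (c # v)"
  unfolding wp_def by (subst steps_split) simp

lemma wp_rev: assumes sym: "\<And>a b. W a b = W b a" shows "wp W (rev w) = wp W w"
proof (induction w rule: steps.induct)
  case (1 a b r)
  have "wp W (rev (a # b # r)) = wp W (rev r @ b # [a])" by simp
  also have "\<dots> = wp W (rev r @ [b]) * wp W [b, a]" by (rule wp_split)
  also have "\<dots> = wp W (b # r) * W a b" using 1 sym[of b a] by (simp add: wp_Cons2)
  finally show ?case by (simp add: wp_Cons2)
qed auto

lemma prod_list_count:
  fixes x :: "'a \<Rightarrow> real"
  assumes "finite U" "set es \<subseteq> U"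
  shows "prod_list (map x es) = (\<Prod>a\<in>U. x a ^ count_list es a)"
  using assms(2)
proof (induction es)
  case Nil then show ?case by simp
next
  case (Cons e es)
  then have e: "e \<in> U" and IH: "prod_list (map x es) = (\<Prod>a\<in>U. x a ^ count_list es a)" by auto
  have "(\<Prod>a\<in>U. x a ^ count_list (e # es) a) =
        x e ^ count_list (e # es) e * (\<Prod>a\<in>U - {e}. x a ^ count_list (e # es) a)"
    by (rule prod.remove[OF assms(1) e])
  also have "(\<Prod>a\<in>U - {e}. x a ^ count_list (e # es) a) = (\<Prod>a\<in>U - {e}. x a ^ count_list es a)"
    by (intro prod.cong) auto
  also have "x e ^ count_list (e # es) e = x e * x e ^ count_list es e" by simp
  also have "x e * x e ^ count_list es e * (\<Prod>a\<in>U - {e}. x a ^ count_list es a) =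
             x e * (\<Prod>a\<in>U. x a ^ count_list es a)"
    by (simp add: prod.remove[OF assms(1) e, of "\<lambda>a. x a ^ count_list es a"] mult.assoc)
  finally show ?case using IH by simp
qed

lemma symW_edge: "symW x u v = x (edge u v)"
  by (simp add: symW_def edge_def)

lemma wp_symW:
  assumes "set w \<subseteq> {..<N}"
  shows "wp (symW x) w = (\<Prod>a\<in>upper_idx N. x a ^ cnt w a)"
proof -
  have fin: "finite (upper_idx N)"
    by (rule finite_subset[of _ "{..<N} \<times> {..<N}"]) (auto simp: upper_idx_def)
  have sub: "set (map (\<lambda>(u, v). edge u v) (steps w)) \<subseteq> upper_idx N"
    using assms set_steps by (fastforce simp: edge_def upper_idx_def)
  have "wp (symW x) w = prod_list (map x (map (\<lambda>(u, v). edge u v) (steps w)))"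
    unfolding wp_def by (simp add: symW_edge case_prod_beta o_def cong: map_cong)
  also have "\<dots> = (\<Prod>a\<in>upper_idx N. x a ^ cnt w a)"
    unfolding cnt_def by (rule prod_list_count[OF fin sub])
  finally show ?thesis .
qed



definition walks :: "nat \<Rightarrow> nat \<Rightarrow> nat list set" where
  "walks N m = {w. length w = Suc m \<and> set w \<subseteq> {..<N}}"

definition Ew :: "real \<Rightarrow> nat \<Rightarrow> nat list \<Rightarrow> real" where
  "Ew \<sigma> N w = (\<Prod>a\<in>upper_idx N. mu \<sigma> (cnt w a))"

definition S :: "real \<Rightarrow> nat \<Rightarrow> nat \<Rightarrow> real" where
  "S \<sigma> N m = (\<Sum>w\<in>walks N m. Ew \<sigma> N w)"

lemma finite_walks: "finite (walks N m)"
  unfolding walks_def using finite_lists_length_eq[of "{..<N}" "Suc m"] by (simp add: conj_commute)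

lemma finite_upper: "finite (upper_idx N)"
  by (rule finite_subset[of _ "{..<N} \<times> {..<N}"]) (auto simp: upper_idx_def)

lemma beta_wp: "beta N W i l = (\<Sum>xs\<in>{xs. length xs = l \<and> set xs \<subseteq> {..<N}}. wp W (i # xs))"
  unfolding beta_def by (intro sum.cong refl beta_prod) simp

lemma pointwise:
  assumes sym: "\<And>a b. W a b = W b a"
  shows "(\<Sum>i<N. beta N W i l1 * beta N W i l2) = (\<Sum>w\<in>walks N (l1 + l2). wp W w)"
proof -
  define L where "L l = {xs. length xs = l \<and> set xs \<subseteq> {..<N}}" for l
  have finL: "finite (L l)" for l
    unfolding L_def using finite_lists_length_eq[of "{..<N}" l] by (simp add: conj_commute)
  define h where "h = (\<lambda>(i::nat, xs::nat list, ys::nat list). rev xs @ i # ys)"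
  have key: "wp W (i # xs) * wp W (i # ys) = wp W (rev xs @ i # ys)" for i xs ys
  proof -
    have "wp W (i # xs) = wp W (rev xs @ [i])"
      using wp_rev[OF sym, where w="i # xs"] by simp
    then show ?thesis using wp_split[of W "rev xs" i ys] by simp
  qed
  have "(\<Sum>i<N. beta N W i l1 * beta N W i l2) =
        (\<Sum>i<N. \<Sum>xs\<in>L l1. \<Sum>ys\<in>L l2. wp W (i # xs) * wp W (i # ys))"
    unfolding beta_wp L_def[symmetric] by (simp add: sum_product)
  also have "\<dots> = (\<Sum>t\<in>{..<N} \<times> (L l1 \<times> L l2). wp W (h t))"
    by (simp add: sum.cartesian_product key h_def split_def)
  also have "\<dots> = (\<Sum>w\<in>walks N (l1 + l2). wp W w)"
  proof (rule sum.reindex_bij_betw)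
    show "bij_betw h ({..<N} \<times> L l1 \<times> L l2) (walks N (l1 + l2))"
    proof (rule bij_betw_byWitness[where f' = "\<lambda>w. (w ! l1, rev (take l1 w), drop (Suc l1) w)"])
      show "\<forall>t\<in>{..<N} \<times> L l1 \<times> L l2. (h t ! l1, rev (take l1 (h t)), drop (Suc l1) (h t)) = t"
        by (auto simp: h_def L_def nth_append)
      show "\<forall>w\<in>walks N (l1 + l2). h (w ! l1, rev (take l1 w), drop (Suc l1) w) = w"
        by (auto simp: h_def walks_def id_take_nth_drop[symmetric])
      show "h ` ({..<N} \<times> L l1 \<times> L l2) \<subseteq> walks N (l1 + l2)"
        by (auto simp: h_def L_def walks_def)
      show "(\<lambda>w. (w ! l1, rev (take l1 w), drop (Suc l1) w)) ` walks N (l1 + l2) \<subseteq> {..<N} \<times> L l1 \<times> L l2"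
      proof -
        have "w ! l1 < N" if "w \<in> walks N (l1 + l2)" for w
          using that nth_mem[of l1 w] unfolding walks_def by (simp add: subset_iff)
        then show ?thesis
          by (auto simp: L_def walks_def dest!: in_set_takeD in_set_dropD)
      qed
    qed
  qed
  finally show ?thesis .
qed

lemma ps_G: assumes "\<sigma> > 0" shows "product_sigma_finite (\<lambda>_::nat\<times>nat. G \<sigma>)"
proof -
  interpret prob_space "G \<sigma>" unfolding G_def using assms by (rule prob_space_normal_density)
  show ?thesis unfolding product_sigma_finite_def by (simp add: sigma_finite_measure_axioms)
qed

lemma gauss_G: "gauss_entries N \<sigma> = PiM (upper_idx N) (\<lambda>_. G \<sigma>)"
  unfolding gauss_entries_def G_def ..

lemma mono_integrable:
  assumes "\<sigma> > 0"
  shows "integrable (gauss_entries N \<sigma>) (\<lambda>x. \<Prod>a\<in>upper_idx N. x a ^ c a)"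
  unfolding gauss_G
  by (rule product_sigma_finite.product_integrable_prod[OF ps_G[OF assms] finite_upper, where f="\<lambda>a t. t ^ c a"])
     (rule integrable_G[OF assms])

lemma mono_integral:
  assumes "\<sigma> > 0"
  shows "(\<integral>x. (\<Prod>a\<in>upper_idx N. x a ^ c a) \<partial>gauss_entries N \<sigma>) = (\<Prod>a\<in>upper_idx N. mu \<sigma> (c a))"
  unfolding gauss_G mu_def
  by (rule product_sigma_finite.product_integral_prod[OF ps_G[OF assms] finite_upper, where f="\<lambda>a t. t ^ c a"])
     (rule integrable_G[OF assms])

lemma Bmom_S:
  assumes "\<sigma> > 0"
  shows "Bmom N \<sigma> l1 l2 = S \<sigma> N (l1 + l2)"
proof -
  have "\<And>x. (\<Sum>i<N. beta N (symW x) i l1 * beta N (symW x) i l2) =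
          (\<Sum>w\<in>walks N (l1 + l2). \<Prod>a\<in>upper_idx N. x a ^ cnt w a)"
    by (subst pointwise) (auto simp: symW_def min.commute max.commute walks_def intro!: sum.cong wp_symW)
  then have "Bmom N \<sigma> l1 l2 = (\<integral>x. (\<Sum>w\<in>walks N (l1 + l2). \<Prod>a\<in>upper_idx N. x a ^ cnt w a) \<partial>gauss_entries N \<sigma>)"
    unfolding Bmom_def by simp
  also have "\<dots> = (\<Sum>w\<in>walks N (l1 + l2). \<integral>x. (\<Prod>a\<in>upper_idx N. x a ^ cnt w a) \<partial>gauss_entries N \<sigma>)"
    apply (rule Bochner_Integration.integral_sum)
    using mono_integrable[OF assms] by auto
  also have "\<dots> = S \<sigma> N (l1 + l2)"
    unfolding S_def Ew_def by (intro sum.cong refl mono_integral[OF assms])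
  finally show ?thesis .
qed



definition ins :: "nat \<Rightarrow> nat \<Rightarrow> nat list \<Rightarrow> nat list" where
  "ins p j w = take (Suc p) w @ j # drop p w"

lemma edge_comm: "edge u v = edge v u"
  by (simp add: edge_def min.commute max.commute)

lemma ins_decomp:
  assumes "p < length w"
  shows "w = take p w @ (w ! p) # drop (Suc p) w"
    and "ins p j w = take p w @ (w ! p) # (j # (w ! p) # drop (Suc p) w)"
  using assms by (auto simp: ins_def id_take_nth_drop[symmetric] take_Suc_conv_app_nth Cons_nth_drop_Suc)

lemma cnt_ins:
  assumes "p < length w"
  shows "cnt (ins p j w) a = cnt w a + (if a = edge (w ! p) j then 2 else 0)"
proof -
  define u v c where "u = take p w" and "v = drop (Suc p) w" and "c = w ! p"
  have w: "w = u @ c # v" and iw: "ins p j w = u @ c # (j # c # v)"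
    using ins_decomp(1)[OF assms] ins_decomp(2)[OF assms, of j] by (simp_all add: u_def v_def c_def)
  have s1: "steps w = steps (u @ [c]) @ steps (c # v)"
    by (subst w, rule steps_split)
  have s2: "steps (ins p j w) = steps (u @ [c]) @ (c, j) # (j, c) # steps (c # v)"
    by (subst iw, subst steps_split) simp
  show ?thesis
    unfolding cnt_def s1 s2 using edge_comm[of j c] by (simp add: c_def)
qed

lemma ins_length: "p < length w \<Longrightarrow> length (ins p j w) = Suc (Suc (length w))"
  by (simp add: ins_def)

lemma ins_walks:
  assumes "w \<in> walks N m" "p \<le> m" "j < N"
  shows "ins p j w \<in> walks N (Suc (Suc m))"
  using assms by (auto simp: walks_def ins_def dest!: in_set_takeD in_set_dropD)

lemma Ew_nonneg: "\<sigma> > 0 \<Longrightarrow> Ew \<sigma> N w \<ge> 0"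
  unfolding Ew_def by (intro prod_nonneg mu_nonneg) auto

lemma Ew_ins:
  assumes s: "\<sigma> > 0" and w: "w \<in> walks N m" and p: "p \<le> m" and j: "j < N"
  shows "Ew \<sigma> N (ins p j w) = \<sigma>\<^sup>2 * (real (cnt w (edge (w ! p) j)) + 1) * Ew \<sigma> N w"
proof -
  define e where "e = edge (w ! p) j"
  have pl: "p < length w" using w p by (simp add: walks_def)
  have "w ! p < N" using w pl nth_mem[OF pl] unfolding walks_def by (simp add: subset_iff)
  then have eU: "e \<in> upper_idx N" using j by (auto simp: e_def edge_def upper_idx_def)
  have "Ew \<sigma> N (ins p j w) = mu \<sigma> (cnt (ins p j w) e) * (\<Prod>a\<in>upper_idx N - {e}. mu \<sigma> (cnt (ins p j w) a))"
    unfolding Ew_def by (rule prod.remove[OF finite_upper eU])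
  also have "(\<Prod>a\<in>upper_idx N - {e}. mu \<sigma> (cnt (ins p j w) a)) = (\<Prod>a\<in>upper_idx N - {e}. mu \<sigma> (cnt w a))"
    by (intro prod.cong refl) (auto simp: cnt_ins[OF pl] e_def)
  also have "mu \<sigma> (cnt (ins p j w) e) = \<sigma>\<^sup>2 * (real (cnt w e) + 1) * mu \<sigma> (cnt w e)"
    using mu_rec[OF s, of "cnt w e"] by (simp add: cnt_ins[OF pl] e_def)
  also have "\<sigma>\<^sup>2 * (real (cnt w e) + 1) * mu \<sigma> (cnt w e) * (\<Prod>a\<in>upper_idx N - {e}. mu \<sigma> (cnt w a))
     = \<sigma>\<^sup>2 * (real (cnt w e) + 1) * Ew \<sigma> N w"
    unfolding Ew_def by (simp add: prod.remove[OF finite_upper eU, of "\<lambda>a. mu \<sigma> (cnt w a)"] mult.assoc)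
  finally show ?thesis by (simp add: e_def)
qed

lemma ins_inj:
  assumes "p \<le> m"
  shows "inj_on (\<lambda>(w, j). ins p j w) (walks N m \<times> UNIV)"
proof (rule inj_onI, clarify)
  fix w j w' j' assume w: "w \<in> walks N m" and w': "w' \<in> walks N m" and eq: "ins p j w = ins p j' w'"
  have l: "length w = Suc m" "length w' = Suc m" using w w' by (auto simp: walks_def)
  have t: "take (Suc p) w = take (Suc p) w'"
    using arg_cong[OF eq, of "take (Suc p)"] l assms by (simp add: ins_def)
  have jj: "j = j'"
    using arg_cong[OF eq, of "\<lambda>x. x ! Suc p"] l assms by (simp add: ins_def nth_append)
  have d: "drop p w = drop p w'"
    using arg_cong[OF eq, of "drop (Suc (Suc p))"] l assms by (simp add: ins_def)
  have "w = take (Suc p) w @ drop (Suc p) w" by simp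
  also have "drop (Suc p) w = drop 1 (drop p w)" by simp
  finally have "w = take (Suc p) w' @ drop 1 (drop p w')" using t d by simp
  also have "\<dots> = w'" by simp
  finally show "w = w' \<and> j = j'" using jj by simp
qed

lemma sum_ins_le:
  assumes s: "\<sigma> > 0"
  shows "(\<Sum>w\<in>walks N m. \<Sum>p<Suc m. \<Sum>j<N. Ew \<sigma> N (ins p j w)) \<le> real (Suc m) * S \<sigma> N (Suc (Suc m))"
proof -
  have "(\<Sum>w\<in>walks N m. \<Sum>p<Suc m. \<Sum>j<N. Ew \<sigma> N (ins p j w)) =
        (\<Sum>p<Suc m. \<Sum>t\<in>walks N m \<times> {..<N}. Ew \<sigma> N ((\<lambda>(w, j). ins p j w) t))"
  proof -
    have "(\<Sum>w\<in>walks N m. \<Sum>p<Suc m. \<Sum>j<N. Ew \<sigma> N (ins p j w)) =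
          (\<Sum>p<Suc m. \<Sum>w\<in>walks N m. \<Sum>j<N. Ew \<sigma> N (ins p j w))"
      by (rule sum.swap)
    also have "\<dots> = (\<Sum>p<Suc m. \<Sum>t\<in>walks N m \<times> {..<N}. Ew \<sigma> N ((\<lambda>(w, j). ins p j w) t))"
      by (intro sum.cong refl) (simp add: sum.cartesian_product split_def)
    finally show ?thesis .
  qed
  also have "\<dots> \<le> (\<Sum>p<Suc m. S \<sigma> N (Suc (Suc m)))"
  proof (rule sum_mono)
    fix p assume "p \<in> {..<Suc m}"
    then have p: "p \<le> m" by simp
    have inj: "inj_on (\<lambda>(w, j). ins p j w) (walks N m \<times> {..<N})"
      by (rule inj_on_subset[OF ins_inj[OF p]]) auto
    have "(\<Sum>t\<in>walks N m \<times> {..<N}. Ew \<sigma> N ((\<lambda>(w, j). ins p j w) t)) =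
          (\<Sum>w'\<in>(\<lambda>(w, j). ins p j w) ` (walks N m \<times> {..<N}). Ew \<sigma> N w')"
      by (rule sum.reindex[OF inj, symmetric, unfolded o_def])
    also have "\<dots> \<le> (\<Sum>w'\<in>walks N (Suc (Suc m)). Ew \<sigma> N w')"
      by (rule sum_mono2[OF finite_walks]) (auto intro: ins_walks[OF _ p] Ew_nonneg[OF s])
    finally show "(\<Sum>t\<in>walks N m \<times> {..<N}. Ew \<sigma> N ((\<lambda>(w, j). ins p j w) t)) \<le> S \<sigma> N (Suc (Suc m))"
      by (simp add: S_def)
  qed
  also have "\<dots> = real (Suc m) * S \<sigma> N (Suc (Suc m))" by simp
  finally show ?thesis .
qed



definition ind :: "bool \<Rightarrow> real" where "ind P = (if P then 1 else 0)"

lemma ind_sum_delta: fixes N :: nat shows "a < N \<Longrightarrow> (\<Sum>v<N. ind (a = v) * f v) = f a"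
proof -
  assume a: "a < N"
  have "(\<Sum>v<N. ind (a = v) * f v) = (\<Sum>v<N. if a = v then f v else 0)"
    by (intro sum.cong) (auto simp: ind_def)
  also have "\<dots> = (if a \<in> {..<N} then f a else 0)"
    by (rule sum.delta') simp
  finally show ?thesis using a by simp
qed

lemma ind_ge0: "ind P \<ge> 0" and ind_le1: "ind P \<le> 1"
  by (auto simp: ind_def)

lemma count_list_sum: "count_list xs a = (\<Sum>q<length xs. if xs ! q = a then 1 else 0)"
proof (induction xs)
  case (Cons x xs)
  show ?case by (simp only: length_Cons sum.lessThan_Suc_shift) (simp add: Cons.IH)
qed simp

lemma cnt_sum:
  assumes "length w = Suc m"
  shows "real (cnt w a) = (\<Sum>q<m. ind (edge (w ! q) (w ! Suc q) = a))"
proof -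
  have "cnt w a = (\<Sum>q<m. if edge (w ! q) (w ! Suc q) = a then 1 else 0)"
    unfolding cnt_def count_list_sum using assms
    by (intro sum.cong) (auto simp: length_steps nth_steps)
  then have "real (cnt w a) = (\<Sum>q<m. real (if edge (w ! q) (w ! Suc q) = a then 1 else 0))"
    by (simp only: of_nat_sum)
  then show ?thesis by (auto simp: ind_def intro!: sum.cong)
qed

lemma deg_bound:
  assumes w: "w \<in> walks N m"
  shows "(\<Sum>j<N. real (cnt w (edge v j))) \<ge> (\<Sum>q<m. ind (w ! Suc q = v))"
proof -
  have l: "length w = Suc m" using w by (simp add: walks_def)
  have lt: "w ! q < N" if "q < Suc m" for q
    using w that nth_mem[of q w] l unfolding walks_def by (simp add: subset_iff)
  have "(\<Sum>q<m. ind (w ! Suc q = v)) =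
        (\<Sum>q<m. \<Sum>j<N. ind (w ! q = j) * ind (w ! Suc q = v))"
    using lt by (intro sum.cong refl) (simp add: ind_sum_delta)
  also have "\<dots> \<le> (\<Sum>q<m. \<Sum>j<N. ind (edge (w ! q) (w ! Suc q) = edge v j))"
    by (intro sum_mono) (auto simp: edge_comm ind_def)
  also have "\<dots> = (\<Sum>j<N. real (cnt w (edge v j)))"
    by (subst sum.swap) (simp add: cnt_sum[OF l])
  finally show ?thesis .
qed

lemma visits:
  assumes w: "w \<in> walks N m" and N: "N \<ge> 1"
  shows "(\<Sum>p<Suc m. \<Sum>q<Suc m. ind (w ! q = w ! p)) * real N \<ge> (real (Suc m))\<^sup>2"
proof -
  have l: "length w = Suc m" using w by (simp add: walks_def)
  have lt: "w ! q < N" if "q < Suc m" for q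
    using w that nth_mem[of q w] l unfolding walks_def by (simp add: subset_iff)
  define c where "c v = (\<Sum>p<Suc m. ind (w ! p = v) :: real)" for v
  have s1: "(\<Sum>v<N. c v) = real (Suc m)"
  proof -
    have "(\<Sum>v<N. c v) = (\<Sum>p<Suc m. \<Sum>v<N. ind (w ! p = v) :: real)"
      unfolding c_def by (rule sum.swap)
    also have "\<dots> = (\<Sum>p<Suc m. 1)"
      using lt ind_sum_delta[of _ N "\<lambda>_. 1"] by (intro sum.cong refl) simp
    finally show ?thesis by simp
  qed
  have s2: "(\<Sum>v<N. (c v)\<^sup>2) = (\<Sum>p<Suc m. \<Sum>q<Suc m. ind (w ! q = w ! p))"
  proof -
    have "(\<Sum>v<N. (c v)\<^sup>2) = (\<Sum>v<N. \<Sum>p<Suc m. \<Sum>q<Suc m. ind (w ! p = v) * ind (w ! q = v) :: real)"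
      unfolding c_def power2_eq_square sum_product by simp
    also have "\<dots> = (\<Sum>p<Suc m. \<Sum>q<Suc m. \<Sum>v<N. ind (w ! p = v) * ind (w ! q = v) :: real)"
      by (simp add: sum.swap[of _ "{..<N}"])
    also have "\<dots> = (\<Sum>p<Suc m. \<Sum>q<Suc m. ind (w ! q = w ! p))"
      using lt ind_sum_delta[of _ N "\<lambda>v. ind (w ! _ = v)"] by (intro sum.cong refl) simp
    finally show ?thesis .
  qed
  show ?thesis
    using sum_squared_le_sum_of_squares[of c "{..<N}"] s1 s2 by simp
qed

lemma T_bound:
  assumes w: "w \<in> walks N m" and N: "N \<ge> 1"
  shows "(\<Sum>p<Suc m. \<Sum>j<N. (real (cnt w (edge (w ! p) j)) + 1)) \<ge>
         real (Suc m) * (real N - 1) + (real (Suc m))\<^sup>2 / real N"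
proof -
  define X where "X = (\<Sum>p<Suc m. \<Sum>q<Suc m. ind (w ! q = w ! p) :: real)"
  have XN: "X * real N \<ge> (real (Suc m))\<^sup>2" using visits[OF w N] by (simp add: X_def)
  have X: "X \<ge> (real (Suc m))\<^sup>2 / real N" using XN N by (simp add: divide_le_eq)
  have "(\<Sum>p<Suc m. \<Sum>j<N. (real (cnt w (edge (w ! p) j)) + 1)) =
        (\<Sum>p<Suc m. \<Sum>j<N. real (cnt w (edge (w ! p) j))) + real (Suc m) * real N"
    by (simp add: sum.distrib)
  moreover have "(\<Sum>p<Suc m. \<Sum>j<N. real (cnt w (edge (w ! p) j))) \<ge>
        (\<Sum>p<Suc m. \<Sum>q<m. ind (w ! Suc q = w ! p))"
    by (intro sum_mono deg_bound[OF w])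
  moreover have "(\<Sum>p<Suc m. \<Sum>q<m. ind (w ! Suc q = w ! p) :: real) \<ge> X - real (Suc m)"
  proof -
    have "(\<Sum>p<Suc m. \<Sum>q<m. ind (w ! Suc q = w ! p) :: real) =
          (\<Sum>p<Suc m. (\<Sum>q<Suc m. ind (w ! q = w ! p)) - ind (w ! 0 = w ! p))"
      by (intro sum.cong refl) (subst sum.lessThan_Suc_shift, simp)
    also have "\<dots> \<ge> (\<Sum>p<Suc m. (\<Sum>q<Suc m. ind (w ! q = w ! p)) - 1)"
      by (intro sum_mono) (simp add: ind_le1)
    also have "(\<Sum>p<Suc m. (\<Sum>q<Suc m. ind (w ! q = w ! p)) - (1::real)) = X - real (Suc m)"
      by (simp add: X_def sum_subtractf)
    finally show ?thesis .
  qed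
  ultimately show ?thesis using X by (simp add: algebra_simps)
qed



lemma S_nonneg: "\<sigma> > 0 \<Longrightarrow> S \<sigma> N m \<ge> 0"
  unfolding S_def by (intro sum_nonneg Ew_nonneg)

lemma S_step:
  assumes s: "\<sigma> > 0" and N: "N \<ge> 1"
  shows "\<sigma>\<^sup>2 * (real m + real N * (real N + 1) / 2) * S \<sigma> N m \<le>
         real N * (real N + 1) / 2 * S \<sigma> N (Suc (Suc m))"
proof -
  define K where "K = real (Suc m) * (real N - 1) + (real (Suc m))\<^sup>2 / real N"
  define d where "d = real N * (real N + 1) / 2"
  have "(\<Sum>w\<in>walks N m. \<Sum>p<Suc m. \<Sum>j<N. Ew \<sigma> N (ins p j w)) =
        (\<Sum>w\<in>walks N m. \<sigma>\<^sup>2 * Ew \<sigma> N w * (\<Sum>p<Suc m. \<Sum>j<N. (real (cnt w (edge (w ! p) j)) + 1)))"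
  proof (intro sum.cong refl)
    fix w assume w: "w \<in> walks N m"
    have "(\<Sum>p<Suc m. \<Sum>j<N. Ew \<sigma> N (ins p j w)) =
          (\<Sum>p<Suc m. \<Sum>j<N. \<sigma>\<^sup>2 * Ew \<sigma> N w * (real (cnt w (edge (w ! p) j)) + 1))"
      using Ew_ins[OF s w] by (intro sum.cong refl) simp
    also have "\<dots> = \<sigma>\<^sup>2 * Ew \<sigma> N w * (\<Sum>p<Suc m. \<Sum>j<N. (real (cnt w (edge (w ! p) j)) + 1))"
      by (simp only: sum_distrib_left)
    finally show "(\<Sum>p<Suc m. \<Sum>j<N. Ew \<sigma> N (ins p j w)) =
          \<sigma>\<^sup>2 * Ew \<sigma> N w * (\<Sum>p<Suc m. \<Sum>j<N. (real (cnt w (edge (w ! p) j)) + 1))" .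
  qed
  also have "\<dots> \<ge> (\<Sum>w\<in>walks N m. \<sigma>\<^sup>2 * Ew \<sigma> N w * K)"
    using T_bound[OF _ N] Ew_nonneg[OF s]
    by (intro sum_mono mult_left_mono) (auto simp: K_def)
  finally have A: "\<sigma>\<^sup>2 * K * S \<sigma> N m \<le> real (Suc m) * S \<sigma> N (Suc (Suc m))"
    using sum_ins_le[OF s, of N m] unfolding S_def by (simp add: sum_distrib_left sum_distrib_right mult_ac)
  have Nr: "real N \<ge> 1" using N by simp
  have dK: "d * K \<ge> real (Suc m) * (real m + d)"
  proof -
    have "d * K - real (Suc m) * (real m + d) =
          real (Suc m) * ((real N - 1)\<^sup>2 * (real N + 1) + real m * (real N - 1)) / 2"
      using Nr unfolding d_def K_def by (simp add: field_simps power2_eq_square)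
    also have "\<dots> \<ge> 0" using Nr by simp
    finally show ?thesis by simp
  qed
  have Sm: "\<sigma>\<^sup>2 * S \<sigma> N m \<ge> 0" using S_nonneg[OF s] by simp
  have "real (Suc m) * (\<sigma>\<^sup>2 * (real m + d) * S \<sigma> N m) = (\<sigma>\<^sup>2 * S \<sigma> N m) * (real (Suc m) * (real m + d))"
    by (simp add: mult_ac)
  also have "\<dots> \<le> (\<sigma>\<^sup>2 * S \<sigma> N m) * (d * K)"
    by (rule mult_left_mono[OF dK Sm])
  also have "\<dots> = d * (\<sigma>\<^sup>2 * K * S \<sigma> N m)" by (simp add: mult_ac)
  also have "\<dots> \<le> d * (real (Suc m) * S \<sigma> N (Suc (Suc m)))"
    by (rule mult_left_mono[OF A]) (simp add: d_def)
  also have "\<dots> = real (Suc m) * (d * S \<sigma> N (Suc (Suc m)))" by (simp add: mult_ac)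
  finally have "real (Suc m) * (\<sigma>\<^sup>2 * (real m + d) * S \<sigma> N m) \<le> real (Suc m) * (d * S \<sigma> N (Suc (Suc m)))" .
  then show ?thesis unfolding d_def[symmetric] by (simp only: mult_le_cancel_left_pos of_nat_0_less_iff zero_less_Suc)
qed

theorem mainTheorem9:
  fixes N T l1 l2 :: nat and \<sigma> :: real
  assumes "N \<ge> 1" and "\<sigma> > 0" and "T \<ge> 1"
    and "l1 < T" and "l2 < T"
  shows "Bmom N \<sigma> l1 l2 \<le>
           (1 / \<sigma>\<^sup>2) * (1 / (real (l1 + l2) / (real N * (real N + 1) / 2) + 1))
             * Bmom N \<sigma> (l1 + 1) (l2 + 1)"
proof -
  define m where "m = l1 + l2"
  define d where "d = real N * (real N + 1) / 2"
  have dpos: "d > 0" using assms(1) by (simp add: d_def)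
  have B1: "Bmom N \<sigma> l1 l2 = S \<sigma> N m" using Bmom_S[OF assms(2)] by (simp add: m_def)
  have B2: "Bmom N \<sigma> (l1 + 1) (l2 + 1) = S \<sigma> N (Suc (Suc m))"
    using Bmom_S[OF assms(2), of N "l1 + 1" "l2 + 1"] by (simp add: m_def)
  have step: "\<sigma>\<^sup>2 * (real m + d) * S \<sigma> N m \<le> d * S \<sigma> N (Suc (Suc m))"
    using S_step[OF assms(2) assms(1), of m] by (simp add: d_def)
  have pos: "\<sigma>\<^sup>2 * (real m + d) > 0" using dpos assms(2) by simp
  have eq: "(1 / \<sigma>\<^sup>2) * (1 / (real m / d + 1)) * S \<sigma> N (Suc (Suc m)) =
            d * S \<sigma> N (Suc (Suc m)) / (\<sigma>\<^sup>2 * (real m + d))"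
    using dpos assms(2) by (simp add: field_simps)
  have "S \<sigma> N m \<le> d * S \<sigma> N (Suc (Suc m)) / (\<sigma>\<^sup>2 * (real m + d))"
    using step pos by (simp add: pos_le_divide_eq mult.commute)
  then show ?thesis unfolding B1 B2 using eq by (simp add: m_def d_def)
qed

end
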